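(* In the QC setting, suppose the weights are $\alpha(i)=\frac{a}{(i+1)^{\tau}}$ with $a>0$ and $\tfrac12<\tau\le1$. Let $\theta$ be the a.s. finite random variable with $\mathbf{x}(i)\to\theta\mathbf{1}$ a.s. (which exists for the QC recursion). Then $\lim_{i\to\infty}\mathbb{E}\big[(x_n(i)-\theta)^2\big]=0$ for every $n=1,\dots,N$.
   Context: QC setting. Let $N\ge 2$; all random objects live on one probability space. $\{L(i)\}_{i\ge0}$ is an i.i.d. sequence of random graph Laplacians $L(i)=D(i)-A(i)$, where $A(i)$ is the adjacency matrix (symmetric, $\{0,1\}$-valued, zero diagonal) of a random undirected simple graph on $\{1,\dots,N\}$, $D(i)=\mathrm{diag}(d_1(i),\dots,d_N(i))$ with $d_n(i)$ the degree of node $n$, and $\Omega_n(i)=\{l:A_{nl}(i)=1\}$. Link failures at a given time may be arbitrarily correlated across edges. Let $\overline{L}=\mathbb{E}[L(i)]$ with eigenvalues $0=\lambda_1(\overline{L})\le\lambda_2(\overline{L})\le\cdots\le\lambda_N(\overline{L})$; assume $\lambda_2(\overline{L})>0$. $\mathcal{M}$ denotes the set of realizable edges. Quantizer: step $\Delta>0$, $q(y)=k\Delta$ if $(k-\tfrac12)\Delta\le y<(k+\tfrac12)\Delta$, $k\in\mathbb{Z}$. Dither: $\{\nu_{nl}(i)\}$ i.i.d. uniform on $[-\Delta/2,\Delta/2)$, independent of $\{L(i)\}$. QC recursion: $x_n(i+1)=(1-\alpha(i)d_n(i))x_n(i)+\alpha(i)\sum_{l\in\Omega_n(i)}q(x_l(i)+\nu_{nl}(i))$,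 with deterministic $\mathbf{x}(0)\in\mathbb{R}^N$. With $\varepsilon_{nl}(i)=q(x_l(i)+\nu_{nl}(i))-(x_l(i)+\nu_{nl}(i))$, $\Upsilon_n(i)=-\sum_{l\in\Omega_n(i)}\nu_{nl}(i)$, $\Psi_n(i)=-\sum_{l\in\Omega_n(i)}\varepsilon_{nl}(i)$, this reads $\mathbf{x}(i+1)=\mathbf{x}(i)-\alpha(i)[L(i)\mathbf{x}(i)+\Upsilon(i)+\Psi(i)]$. Conditionally on $\mathbf{x}(0),\{L(j),\Upsilon(j),\Psi(j)\}_{j<i}$ and $L(i)$, the $\varepsilon_{nl}(i)$ are i.i.d. uniform on $[-\Delta/2,\Delta/2)$ (as are the $\nu_{nl}(i)$). *)

theory Defs
  imports "HOL-Probability.Probability" "HOL-Computational_Algebra.Polynomial"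
begin

text \<open>Graphs on the finite node type 'n are given by adjacency predicates
  G :: 'n => 'n => bool (symmetric, irreflexive).\<close>

definition deg :: "('n::finite \<Rightarrow> 'n \<Rightarrow> bool) \<Rightarrow> 'n \<Rightarrow> nat" where
  "deg G n = card {l. G n l}"

definition lap :: "('n::finite \<Rightarrow> 'n \<Rightarrow> bool) \<Rightarrow> 'n \<Rightarrow> 'n \<Rightarrow> real" where
  "lap G n l = (if n = l then real (deg G n) else 0) - (if G n l then 1 else 0)"

text \<open>Quantizer: q(y) = k*Delta iff (k - 1/2) Delta <= y < (k + 1/2) Delta.\<close>
definition quant :: "real \<Rightarrow> real \<Rightarrow> real" where
  "quant \<Delta> y = \<Delta> * of_int \<lfloor>y / \<Delta> + 1/2\<rfloor>"

definition charpoly :: "real^'n^'n \<Rightarrow> real poly" where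
  "charpoly A = det (\<chi> i j. (if i = j then [:0, 1:] else 0) - [:A $ i $ j:])"

definition eigenvalues_sorted :: "real^'n^'n \<Rightarrow> real list" where
  "eigenvalues_sorted A = sorted_list_of_multiset (proots (charpoly A))"

text \<open>lambda_2: the second smallest eigenvalue (index 1 of the sorted list).\<close>
definition lambda2 :: "real^'n^'n \<Rightarrow> real" where
  "lambda2 A = eigenvalues_sorted A ! 1"

end

theory Submission
  imports Defs "HOL-Real_Asymp.Real_Asymp"
begin



lemma quant_err:
  assumes "\<Delta> > 0" shows "\<bar>quant \<Delta> z - z\<bar> \<le> \<Delta>/2"
proof -
  have a: "real_of_int \<lfloor>z/\<Delta> + 1/2\<rfloor> \<le> z/\<Delta> + 1/2" by (rule of_int_floor_le)
  have b: "z/\<Delta> + 1/2 < real_of_int \<lfloor>z/\<Delta> + 1/2\<rfloor> + 1" by (rule real_of_int_floor_add_one_gt)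
  have c: "\<Delta> * (z/\<Delta>) = z" using assms by simp
  from a have "\<Delta> * real_of_int \<lfloor>z/\<Delta> + 1/2\<rfloor> \<le> \<Delta> * (z/\<Delta> + 1/2)"
    using assms by (intro mult_left_mono) auto
  moreover from b have "\<Delta> * (z/\<Delta> + 1/2) < \<Delta> * (real_of_int \<lfloor>z/\<Delta> + 1/2\<rfloor> + 1)"
    using assms by (intro mult_strict_left_mono) auto
  ultimately have "\<Delta> * real_of_int \<lfloor>z/\<Delta> + 1/2\<rfloor> \<le> z + \<Delta>/2" "z + \<Delta>/2 < \<Delta> + \<Delta> * real_of_int \<lfloor>z/\<Delta> + 1/2\<rfloor>"
    using c assms by (simp_all add: algebra_simps)
  then show ?thesis unfolding quant_def abs_le_iff by linarith
qed

lemma quant_le: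
  assumes "\<Delta> > 0" "z \<le> of_int c * \<Delta>" "v < \<Delta>/2"
  shows "quant \<Delta> (z + v) \<le> of_int c * \<Delta>"
proof -
  have "(z+v)/\<Delta> < of_int c + 1/2" using assms by (simp add: field_simps)
  hence "\<lfloor>(z+v)/\<Delta> + 1/2\<rfloor> \<le> c" by (simp add: floor_le_iff)
  hence "real_of_int \<lfloor>(z+v)/\<Delta> + 1/2\<rfloor> \<le> of_int c" by linarith
  thus ?thesis unfolding quant_def using assms(1) by (simp add: mult.commute)
qed

lemma quant_ge:
  assumes "\<Delta> > 0" "- (of_int c * \<Delta>) \<le> z" "- (\<Delta>/2) \<le> v"
  shows "- (of_int c * \<Delta>) \<le> quant \<Delta> (z + v)"
proof -
  have "- of_int c \<le> (z+v)/\<Delta> + 1/2" using assms by (simp add: field_simps)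
  hence "- c \<le> \<lfloor>(z+v)/\<Delta> + 1/2\<rfloor>" by (simp add: le_floor_iff)
  hence "- of_int c \<le> real_of_int \<lfloor>(z+v)/\<Delta> + 1/2\<rfloor>" by linarith
  hence "\<Delta> * (- of_int c) \<le> \<Delta> * real_of_int \<lfloor>(z+v)/\<Delta> + 1/2\<rfloor>"
    using assms(1) by (intro mult_left_mono) auto
  thus ?thesis unfolding quant_def by (simp add: mult.commute)
qed

lemma deg_le: "deg (G::'n::finite \<Rightarrow> 'n \<Rightarrow> bool) n \<le> CARD('n)"
  unfolding deg_def by (rule card_mono) auto

fun bseq :: "(nat \<Rightarrow> real) \<Rightarrow> real \<Rightarrow> real \<Rightarrow> real \<Rightarrow> nat \<Rightarrow> real" where
  "bseq al N D b0 0 = b0"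
| "bseq al N D b0 (Suc i) = (1 + 2 * al i * N) * bseq al N D b0 i + al i * N * D"

lemma bseq_nonneg: "b0 \<ge> 0 \<Longrightarrow> (\<And>i. al i \<ge> 0) \<Longrightarrow> N \<ge> 0 \<Longrightarrow> D \<ge> 0 \<Longrightarrow> bseq al N D b0 i \<ge> 0"
  by (induction i) auto

lemma step_bound:
  fixes y :: "'n::finite \<Rightarrow> real" and y' :: real and al :: real and G :: "'n \<Rightarrow> 'n \<Rightarrow> bool"
  assumes D: "\<Delta> > 0" and al: "al \<ge> 0" and b: "\<And>n. \<bar>y n\<bar> \<le> b"
    and v: "\<And>l. G n l \<Longrightarrow> \<bar>v l\<bar> \<le> \<Delta>/2"
    and rec: "y' = (1 - al * real (deg G n)) * y n + al * (\<Sum>l\<in>{l. G n l}. quant \<Delta> (y l + v l))"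
  shows "\<bar>y'\<bar> \<le> (1 + 2 * al * CARD('n)) * b + al * CARD('n) * \<Delta>"
proof -
  define d where "d = real (deg G n)"
  have dN: "d \<le> CARD('n)" unfolding d_def using deg_le[of G n] by simp
  have d0: "d \<ge> 0" unfolding d_def by simp
  have b0: "b \<ge> 0" using b[of n] by linarith
  have cd: "card {l. G n l} = deg G n" unfolding deg_def by simp
  have q: "\<bar>quant \<Delta> (y l + v l)\<bar> \<le> b + \<Delta>" if "G n l" for l
  proof -
    have "\<bar>quant \<Delta> (y l + v l) - (y l + v l)\<bar> \<le> \<Delta>/2" by (rule quant_err[OF D])
    thus ?thesis using b[of l] v[OF that] by linarith
  qed
  have "\<bar>\<Sum>l\<in>{l. G n l}. quant \<Delta> (y l + v l)\<bar> \<le> (\<Sum>l\<in>{l. G n l}. \<bar>quant \<Delta> (y l + v l)\<bar>)"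
    by (rule sum_abs)
  also have "\<dots> \<le> (\<Sum>l\<in>{l. G n l}. b + \<Delta>)" by (rule sum_mono) (use q in auto)
  also have "\<dots> = d * (b + \<Delta>)" using cd by (simp add: d_def)
  finally have S: "\<bar>\<Sum>l\<in>{l. G n l}. quant \<Delta> (y l + v l)\<bar> \<le> d * (b + \<Delta>)" .
  have "\<bar>y'\<bar> \<le> \<bar>1 - al * d\<bar> * \<bar>y n\<bar> + al * \<bar>\<Sum>l\<in>{l. G n l}. quant \<Delta> (y l + v l)\<bar>"
    unfolding rec d_def[symmetric] using al by (simp add: abs_mult abs_triangle_ineq order_trans[OF abs_triangle_ineq])
  also have "\<dots> \<le> (1 + al * d) * b + al * (d * (b + \<Delta>))"
  proof (intro add_mono mult_mono mult_left_mono S)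
    show "\<bar>1 - al * d\<bar> \<le> 1 + al * d" using al d0 by (simp add: abs_le_iff)
  qed (use b al d0 in auto)
  also have "\<dots> \<le> (1 + 2 * al * CARD('n)) * b + al * CARD('n) * \<Delta>"
  proof -
    have "al * d \<le> al * CARD('n)" using mult_left_mono[OF dN al] .
    hence "al * d * b \<le> al * CARD('n) * b" "al * d * \<Delta> \<le> al * CARD('n) * \<Delta>"
      using b0 D by (auto intro: mult_right_mono)
    thus ?thesis by (simp add: algebra_simps)
  qed
  finally show ?thesis .
qed

lemma step_inv:
  fixes y :: "'n::finite \<Rightarrow> real" and y' :: real and al :: real and G :: "'n \<Rightarrow> 'n \<Rightarrow> bool"
  assumes D: "\<Delta> > 0" and al: "al \<ge> 0" and small: "al * CARD('n) \<le> 1"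
    and b: "\<And>n. \<bar>y n\<bar> \<le> of_int c * \<Delta>"
    and v: "\<And>l. G n l \<Longrightarrow> - (\<Delta>/2) \<le> v l \<and> v l < \<Delta>/2"
    and rec: "y' = (1 - al * real (deg G n)) * y n + al * (\<Sum>l\<in>{l. G n l}. quant \<Delta> (y l + v l))"
  shows "\<bar>y'\<bar> \<le> of_int c * \<Delta>"
proof -
  define K where "K = of_int c * \<Delta>"
  define d where "d = real (deg G n)"
  have dN: "d \<le> CARD('n)" unfolding d_def using deg_le[of G n] by simp
  have d0: "d \<ge> 0" unfolding d_def by simp
  have ad: "al * d \<le> 1" using mult_left_mono[OF dN al] small by linarith
  have cd: "card {l. G n l} = deg G n" unfolding deg_def by simp
  have q: "\<bar>quant \<Delta> (y l + v l)\<bar> \<le> K" if "G n l" for l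
    using quant_le[OF D _ conjunct2[OF v[OF that]], of "y l" c]
      quant_ge[OF D _ conjunct1[OF v[OF that]], of c "y l"] b[of l]
    unfolding K_def by (auto simp: abs_le_iff)
  have "\<bar>\<Sum>l\<in>{l. G n l}. quant \<Delta> (y l + v l)\<bar> \<le> (\<Sum>l\<in>{l. G n l}. \<bar>quant \<Delta> (y l + v l)\<bar>)"
    by (rule sum_abs)
  also have "\<dots> \<le> (\<Sum>l\<in>{l. G n l}. K)" by (rule sum_mono) (use q in auto)
  also have "\<dots> = d * K" using cd by (simp add: d_def)
  finally have S: "\<bar>\<Sum>l\<in>{l. G n l}. quant \<Delta> (y l + v l)\<bar> \<le> d * K" .
  have "\<bar>y'\<bar> \<le> \<bar>1 - al * d\<bar> * \<bar>y n\<bar> + al * \<bar>\<Sum>l\<in>{l. G n l}. quant \<Delta> (y l + v l)\<bar>"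
    unfolding rec d_def[symmetric] using al by (simp add: abs_mult order_trans[OF abs_triangle_ineq])
  also have "\<dots> \<le> (1 - al * d) * K + al * (d * K)"
    using ad b[of n] S al unfolding K_def by (intro add_mono mult_mono mult_left_mono) auto
  also have "\<dots> = K" by (simp add: algebra_simps)
  finally show ?thesis unfolding K_def .
qed


theorem mainTheorem3:
  fixes M :: "'a measure"
    and A :: "nat \<Rightarrow> 'a \<Rightarrow> 'n::finite \<Rightarrow> 'n \<Rightarrow> bool"
    and \<nu> :: "nat \<Rightarrow> 'n \<Rightarrow> 'n \<Rightarrow> 'a \<Rightarrow> real"
    and x :: "nat \<Rightarrow> 'a \<Rightarrow> 'n \<Rightarrow> real"
    and x0 :: "'n \<Rightarrow> real"
    and \<theta> :: "'a \<Rightarrow> real"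
    and \<Delta> a \<tau> :: real
    and \<alpha> :: "nat \<Rightarrow> real"
    and Lbar :: "real^'n^'n"
  assumes P: "prob_space M"
    and N2: "CARD('n) \<ge> 2"
    and sym: "\<And>i \<omega> n l. A i \<omega> n l = A i \<omega> l n"
    and irrefl: "\<And>i \<omega> n. \<not> A i \<omega> n n"
    and A_iid_indep: "prob_space.indep_vars M (\<lambda>_. count_space UNIV) A UNIV"
    and A_iid_dist: "\<And>i. distr M (count_space UNIV) (A i) = distr M (count_space UNIV) (A 0)"
    and Lbar_def: "Lbar = (\<chi> n l. prob_space.expectation M (\<lambda>\<omega>. lap (A 0 \<omega>) n l))"
    and lambda2_pos: "lambda2 Lbar > 0"
    and \<Delta>_pos: "\<Delta> > 0"
    and dither_indep: "prob_space.indep_vars M (\<lambda>_. borel) (\<lambda>(i, n, l). \<nu> i n l)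
                         {(i, n, l). n \<noteq> l}"
    and dither_unif: "\<And>i n l. n \<noteq> l \<Longrightarrow>
           distr M lborel (\<nu> i n l) = uniform_measure lborel {-\<Delta>/2..<\<Delta>/2}"
    and dither_graph_indep: "prob_space.indep_set M
           (sigma_sets (space M) (\<Union>i. {A i -` S \<inter> space M | S. S \<in> sets (count_space UNIV)}))
           (sigma_sets (space M) (\<Union>(i, n, l)\<in>{(i, n, l). n \<noteq> l}.
                {\<nu> i n l -` S \<inter> space M | S. S \<in> sets borel}))"
    and a_pos: "a > 0"
    and \<tau>_lo: "1/2 < \<tau>" and \<tau>_hi: "\<tau> \<le> 1"
    and \<alpha>_def: "\<And>i. \<alpha> i = a / (real i + 1) powr \<tau>"
    and x_0: "\<And>\<omega>. x 0 \<omega> = x0"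
    and x_Suc: "\<And>i \<omega> n. x (Suc i) \<omega> n =
           (1 - \<alpha> i * real (deg (A i \<omega>) n)) * x i \<omega> n
           + \<alpha> i * (\<Sum>l\<in>{l. A i \<omega> n l}. quant \<Delta> (x i \<omega> l + \<nu> i n l \<omega>))"
    and \<theta>_rv: "\<theta> \<in> borel_measurable M"
    and \<theta>_lim: "AE \<omega> in M. \<forall>n. (\<lambda>i. x i \<omega> n) \<longlonglongrightarrow> \<theta> \<omega>"
  shows "\<forall>n. (\<forall>i. integrable M (\<lambda>\<omega>. (x i \<omega> n - \<theta> \<omega>)\<^sup>2)) \<and>
             (\<lambda>i. prob_space.expectation M (\<lambda>\<omega>. (x i \<omega> n - \<theta> \<omega>)\<^sup>2)) \<longlonglongrightarrow> 0"
  proof -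
  interpret prob_space M by (rule P)
  let ?N = "real CARD('n)"
  have Ameas: "A i \<in> measurable M (count_space UNIV)" for i
    using A_iid_indep unfolding indep_vars_def by auto
  have \<nu>meas: "\<nu> i n l \<in> borel_measurable M" if "n \<noteq> l" for i n l
  proof -
    have "(i, n, l) \<in> {(i, n, l). n \<noteq> l}" using that by simp
    with dither_indep show ?thesis unfolding indep_vars_def by fastforce
  qed
  have Apred: "{\<omega> \<in> space M. A i \<omega> n l} \<in> sets M" for i n l
  proof -
    have "(\<lambda>\<omega>. A i \<omega> n l) \<in> measurable M (count_space UNIV)"
      by (rule measurable_compose[OF Ameas]) simp
    thus ?thesis by measurable
  qed
  have degm: "(\<lambda>\<omega>. real (deg (A i \<omega>) n)) \<in> borel_measurable M" for i n
    by (rule measurable_compose[OF Ameas]) simp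
  have quantm[measurable]: "quant \<Delta> \<in> borel_measurable borel"
    unfolding quant_def by measurable
  have xmeas: "\<forall>n. (\<lambda>\<omega>. x i \<omega> n) \<in> borel_measurable M" for i
  proof (induction i)
    case 0 then show ?case by (simp add: x_0)
  next
    case (Suc i)
    show ?case
    proof
      fix n
      have eq: "(\<lambda>\<omega>. x (Suc i) \<omega> n) = (\<lambda>\<omega>. (1 - \<alpha> i * real (deg (A i \<omega>) n)) * x i \<omega> n
          + \<alpha> i * (\<Sum>l\<in>UNIV. if A i \<omega> n l then quant \<Delta> (x i \<omega> l + \<nu> i n l \<omega>) else 0))"
        by (simp add: x_Suc sum.inter_filter[symmetric])
      have tm: "(\<lambda>\<omega>. if A i \<omega> n l then quant \<Delta> (x i \<omega> l + \<nu> i n l \<omega>) else 0) \<in> borel_measurable M" for l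
      proof (cases "l = n")
        case True then show ?thesis using irrefl by simp
      next
        case False
        have [measurable]: "\<nu> i n l \<in> borel_measurable M" using \<nu>meas False by auto
        have [measurable]: "(\<lambda>\<omega>. x i \<omega> l) \<in> borel_measurable M" using Suc by auto
        show ?thesis by (rule measurable_If[OF _ _ Apred]) measurable
      qed
      have [measurable]: "(\<lambda>\<omega>. x i \<omega> n) \<in> borel_measurable M" using Suc by auto
      have [measurable]: "(\<lambda>\<omega>. real (deg (A i \<omega>) n)) \<in> borel_measurable M" by (rule degm)
      show "(\<lambda>\<omega>. x (Suc i) \<omega> n) \<in> borel_measurable M"
        unfolding eq using tm by measurable
    qed
  qed
  have AEv: "AE \<omega> in M. \<forall>i n l. n \<noteq> l \<longrightarrow> - (\<Delta>/2) \<le> \<nu> i n l \<omega> \<and> \<nu> i n l \<omega> < \<Delta>/2"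
  proof -
    have "AE \<omega> in M. n \<noteq> l \<longrightarrow> - (\<Delta>/2) \<le> \<nu> i n l \<omega> \<and> \<nu> i n l \<omega> < \<Delta>/2" for i n l
    proof (cases "n = l")
      case False
      have m: "\<nu> i n l \<in> measurable M lborel" using \<nu>meas[OF False] by simp
      have "AE z in distr M lborel (\<nu> i n l). z \<in> {-\<Delta>/2..<\<Delta>/2}"
        unfolding dither_unif[OF False] by (rule AE_uniform_measureI) auto
      from AE_distrD[OF m this] show ?thesis by eventually_elim auto
    qed simp
    thus ?thesis by (simp add: AE_all_countable)
  qed
  have alpos: "\<alpha> i \<ge> 0" for i using a_pos by (simp add: \<alpha>_def)
  have alim: "\<alpha> \<longlonglongrightarrow> 0"
  proof -
    have "\<tau> > 0" using \<tau>_lo by simp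
    hence "(\<lambda>i. a / (real i + 1) powr \<tau>) \<longlonglongrightarrow> 0" by real_asymp
    thus ?thesis using \<alpha>_def by (simp add: fun_eq_iff[of \<alpha>] \<alpha>_def[abs_def])
  qed
  have Npos: "?N > 0" by simp
  from order_tendstoD(2)[OF alim, of "1 / ?N"] Npos
  obtain i0 where i0: "\<And>i. i \<ge> i0 \<Longrightarrow> \<alpha> i < 1 / ?N"
    by (auto simp: eventually_sequentially)
  have small: "\<alpha> i * ?N \<le> 1" if "i \<ge> i0" for i
    using i0[OF that] Npos by (simp add: field_simps)
  define b0 where "b0 = (\<Sum>n\<in>UNIV. \<bar>x0 n\<bar>)"
  define bs where "bs = bseq \<alpha> ?N \<Delta> b0"
  define c where "c = \<lceil>bs i0 / \<Delta>\<rceil>"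
  define K where "K = of_int c * \<Delta>"
  define B where "B = max (Max (bs ` {..i0})) K"
  have bsK: "bs i0 \<le> K" unfolding K_def c_def using \<Delta>_pos
    by (metis divide_le_eq le_of_int_ceiling)
  have good: "\<forall>i n. \<bar>x i \<omega> n\<bar> \<le> B"
    if g: "\<forall>i n l. n \<noteq> l \<longrightarrow> - (\<Delta>/2) \<le> \<nu> i n l \<omega> \<and> \<nu> i n l \<omega> < \<Delta>/2" for \<omega>
  proof -
    have b1: "\<forall>n. \<bar>x i \<omega> n\<bar> \<le> bs i" for i
    proof (induction i)
      case 0
      have "\<bar>x0 n\<bar> \<le> b0" for n unfolding b0_def
        by (rule member_le_sum) auto
      then show ?case by (simp add: x_0 bs_def)
    next
      case (Suc i)
      show ?case
      proof
        fix n
        have "\<bar>x (Suc i) \<omega> n\<bar> \<le> (1 + 2 * \<alpha> i * ?N) * bs i + \<alpha> i * ?N * \<Delta>"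
        proof (rule step_bound[OF \<Delta>_pos alpos, of "\<lambda>l. x i \<omega> l" "bs i" "A i \<omega>" n "\<lambda>l. \<nu> i n l \<omega>"])
          show "\<And>n. \<bar>x i \<omega> n\<bar> \<le> bs i" using Suc by auto
          show "\<And>l. A i \<omega> n l \<Longrightarrow> \<bar>\<nu> i n l \<omega>\<bar> \<le> \<Delta> / 2"
          proof -
            fix l assume "A i \<omega> n l"
            hence "n \<noteq> l" using irrefl by auto
            hence "- (\<Delta>/2) \<le> \<nu> i n l \<omega> \<and> \<nu> i n l \<omega> < \<Delta>/2" using g by blast
            thus "\<bar>\<nu> i n l \<omega>\<bar> \<le> \<Delta> / 2" by (simp only: abs_le_iff) linarith
          qed
        qed (rule x_Suc)
        thus "\<bar>x (Suc i) \<omega> n\<bar> \<le> bs (Suc i)" by (simp add: bs_def)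
      qed
    qed
    have b2: "\<forall>n. \<bar>x (i0 + k) \<omega> n\<bar> \<le> K" for k
    proof (induction k)
      case 0 then show ?case using b1[of i0] bsK by (auto intro: order_trans)
    next
      case (Suc k)
      show ?case
      proof
        fix n
        have "\<bar>x (Suc (i0 + k)) \<omega> n\<bar> \<le> of_int c * \<Delta>"
        proof (rule step_inv[OF \<Delta>_pos alpos small, of "i0 + k" "\<lambda>l. x (i0+k) \<omega> l" c "A (i0+k) \<omega>" n "\<lambda>l. \<nu> (i0+k) n l \<omega>"])
          show "\<And>n. \<bar>x (i0 + k) \<omega> n\<bar> \<le> of_int c * \<Delta>" using Suc by (auto simp: K_def)
          show "\<And>l. A (i0 + k) \<omega> n l \<Longrightarrow> - (\<Delta> / 2) \<le> \<nu> (i0 + k) n l \<omega> \<and> \<nu> (i0 + k) n l \<omega> < \<Delta> / 2"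
          proof -
            fix l assume "A (i0 + k) \<omega> n l"
            hence "n \<noteq> l" using irrefl by auto
            thus "- (\<Delta> / 2) \<le> \<nu> (i0 + k) n l \<omega> \<and> \<nu> (i0 + k) n l \<omega> < \<Delta> / 2" using g by auto
          qed
        qed (auto intro: x_Suc)
        thus "\<bar>x (i0 + Suc k) \<omega> n\<bar> \<le> K" by (simp add: K_def)
      qed
    qed
    show ?thesis
    proof (intro allI)
      fix i n
      show "\<bar>x i \<omega> n\<bar> \<le> B"
      proof (cases "i \<le> i0")
        case True
        have "bs i \<le> Max (bs ` {..i0})" using True by (intro Max_ge) auto
        moreover have "\<bar>x i \<omega> n\<bar> \<le> bs i" using b1[of i] by blast
        ultimately show ?thesis unfolding B_def by linarith
      next
        case False
        then obtain k where "i = i0 + k" by (metis le_add_diff_inverse nat_le_linear)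
        hence "\<bar>x i \<omega> n\<bar> \<le> K" using b2[of k] by blast
        thus ?thesis unfolding B_def by linarith
      qed
    qed
  qed
  have AEB: "AE \<omega> in M. \<forall>i n. \<bar>x i \<omega> n\<bar> \<le> B"
    using AEv by eventually_elim (rule good)
  have AE\<theta>: "AE \<omega> in M. \<bar>\<theta> \<omega>\<bar> \<le> B"
    using AEB \<theta>_lim
  proof eventually_elim
    case (elim \<omega>)
    have "(\<lambda>i. \<bar>x i \<omega> undefined\<bar>) \<longlonglongrightarrow> \<bar>\<theta> \<omega>\<bar>" using elim(2) by (intro tendsto_rabs) auto
    thus ?case using elim(1) by (intro LIMSEQ_le_const2) auto
  qed
  show ?thesis
  proof (intro allI)
    fix n
    let ?s = "\<lambda>i \<omega>. (x i \<omega> n - \<theta> \<omega>)\<^sup>2"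
    have sm: "?s i \<in> borel_measurable M" for i
      using xmeas[of i] \<theta>_rv by (intro borel_measurable_power borel_measurable_diff) auto
    have w: "integrable M (\<lambda>_. (2 * B)\<^sup>2)" by simp
    have bound: "AE \<omega> in M. norm (?s i \<omega>) \<le> (2 * B)\<^sup>2" for i
      using AEB AE\<theta>
    proof eventually_elim
      case (elim \<omega>)
      have "\<bar>x i \<omega> n - \<theta> \<omega>\<bar> \<le> 2 * B" using elim(2) elim(1)[rule_format, of i n] by linarith
      hence "\<bar>x i \<omega> n - \<theta> \<omega>\<bar>\<^sup>2 \<le> (2 * B)\<^sup>2" by (intro power_mono) auto
      thus ?case by simp
    qed
    have lim: "AE \<omega> in M. (\<lambda>i. ?s i \<omega>) \<longlonglongrightarrow> (\<lambda>_. 0) \<omega>"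
      using \<theta>_lim
    proof eventually_elim
      case (elim \<omega>)
      have "(\<lambda>i. x i \<omega> n - \<theta> \<omega>) \<longlonglongrightarrow> 0" using elim[rule_format, of n]
        by (simp add: LIM_zero)
      from tendsto_power[OF this, of 2] show ?case by simp
    qed
    have "(\<lambda>i. integral\<^sup>L M (?s i)) \<longlonglongrightarrow> integral\<^sup>L M (\<lambda>_. 0::real)"
      by (rule integral_dominated_convergence[OF _ sm w lim bound]) simp
    moreover have "integrable M (?s i)" for i
      by (rule integrable_dominated_convergence2[OF _ sm w lim bound]) simp
    ultimately show "(\<forall>i. integrable M (?s i)) \<and> (\<lambda>i. expectation (?s i)) \<longlonglongrightarrow> 0" by simp
  qed
qed

end
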